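(* Fix $q\in[0,1]$, an odd positive integer $\tau$, and parameters $x(z,T)\in[0,1)$ for $z\in\mathbb Z$, $T\in\{1,\dots,\tau\}$ with $z\equiv T \pmod 2$. For $T\in\{1,\dots,\tau\}$ let $\mathcal L_T$ denote the random operation on configurations $\mathcal L_T=\prod_{z\equiv T \ (\mathrm{mod}\ 2)} W_{(z,z+1),x(z,T)}$ (the factors act on disjoint pairs of sites and commute; they are applied independently). Let $s_1,\dots,s_k$ be a finite sequence of transpositions of neighboring integers. Process 1: start from $\eta(z)=z$, $z\in\mathbb Z$; apply $W_{s_1,1},\dots,W_{s_k,1}$ in this order; then apply $\mathcal L_1,\mathcal L_2,\dots,\mathcal L_\tau$ in this order. Let $\eta_1$ be the resulting random configuration. Process 2: start from $\eta(z)=z$, $z\in\mathbb Z$; apply $\mathcal L_\tau,\mathcal L_{\tau-1},\dots,\mathcal L_1$ in this order (i.e., run the same discrete-time dynamics with time-reversed inhomogeneity parameters); then apply $W_{s_k,1},W_{s_{k-1},1},\dots,W_{s_1,1}$ in this order. Let $\eta_2$ be the resulting random configuration. Then $\eta_1$ and $\eta_2$ are (almost surely) bijections $\mathbb Z\to\mathbb Z$, and $\eta_1$ has the same distribution as the inverse bijection $\eta_2^{-1}$.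
   Context: A configuration is a map $\eta:\mathbb Z\to\mathbb Z\cup\{+\infty\}$; $\eta(z)$ is the color of the particle at site $z$. For $z\in\mathbb Z$ let $\sigma_{(z,z+1)}$ exchange the values $\eta(z)$ and $\eta(z+1)$. For $x\in[0,1]$ the random asymmetric swap $W_{(z,z+1),x}$ maps $\eta$ to: $\sigma_{(z,z+1)}\eta$ with probability $x$ and $\eta$ with probability $1-x$ if $\eta(z)<\eta(z+1)$; $\sigma_{(z,z+1)}\eta$ with probability $qx$ and $\eta$ with probability $1-qx$ if $\eta(z)>\eta(z+1)$; $\eta$ with probability 1 if $\eta(z)=\eta(z+1)$. This discrete-time dynamics (step $T$ applies $\mathcal L_T$) is the colored stochastic six vertex model with inhomogeneities $x(z,T)$. *)

theory Defs
  imports "HOL-Probability.Probability"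
begin

text \<open>Configurations (colors in int suffice: starting from the identity, no +infinity appears).\<close>
type_synonym conf = "int \<Rightarrow> int"

definition swap_conf :: "int \<Rightarrow> conf \<Rightarrow> conf" where
  "swap_conf z \<eta> = \<eta>(z := \<eta> (z+1), z+1 := \<eta> z)"

text \<open>Random asymmetric swap W_{(z,z+1),x}, realised with a uniform [0,1] variable u:
  swap with probability x if eta z < eta (z+1), with probability q x if eta z > eta (z+1).\<close>
definition W_step :: "real \<Rightarrow> real \<Rightarrow> int \<Rightarrow> real \<Rightarrow> conf \<Rightarrow> conf" where
  "W_step q x z u \<eta> =
     (if \<eta> z < \<eta> (z+1) then (if u < x then swap_conf z \<eta> else \<eta>)
      else if \<eta> (z+1) < \<eta> z then (if u < q * x then swap_conf z \<eta> else \<eta>)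
      else \<eta>)"

text \<open>L_T: product of independent swaps W_{(z,z+1),x(z,T)} over all z with z = T mod 2,
  using uniform variables U z T. Site y lies in the pair with left endpoint
  y (if y = T mod 2) or y-1 (otherwise).\<close>
definition L_step :: "real \<Rightarrow> (int \<Rightarrow> nat \<Rightarrow> real) \<Rightarrow> nat \<Rightarrow> (int \<Rightarrow> nat \<Rightarrow> real) \<Rightarrow> conf \<Rightarrow> conf" where
  "L_step q x T U \<eta> = (\<lambda>y. let z = (if y mod 2 = int T mod 2 then y else y - 1)
                            in W_step q (x z T) z (U z T) \<eta> y)"

text \<open>Randomness: omega (Inl i) drives the i-th swap W_{s_i,1}, omega (Inr (z,T)) drives
  the swap at (z,z+1) inside L_T. Transposition s_i = (a, a+1) is encoded by a = s ! i.\<close>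
definition Vvar :: "(nat + int \<times> nat \<Rightarrow> real) \<Rightarrow> nat \<Rightarrow> real" where
  "Vvar \<omega> i = \<omega> (Inl i)"

definition Uvar :: "(nat + int \<times> nat \<Rightarrow> real) \<Rightarrow> int \<Rightarrow> nat \<Rightarrow> real" where
  "Uvar \<omega> z T = \<omega> (Inr (z, T))"

definition process1 :: "real \<Rightarrow> (int \<Rightarrow> nat \<Rightarrow> real) \<Rightarrow> nat \<Rightarrow> int list \<Rightarrow> (nat + int \<times> nat \<Rightarrow> real) \<Rightarrow> conf" where
  "process1 q x \<tau> s \<omega> =
     (let \<eta>' = foldl (\<lambda>\<eta> (i, a). W_step q 1 a (Vvar \<omega> i) \<eta>) (\<lambda>z. z) (zip [0..<length s] s)
      in foldl (\<lambda>\<eta> T. L_step q x T (Uvar \<omega>) \<eta>) \<eta>' [1..<Suc \<tau>])"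

definition process2 :: "real \<Rightarrow> (int \<Rightarrow> nat \<Rightarrow> real) \<Rightarrow> nat \<Rightarrow> int list \<Rightarrow> (nat + int \<times> nat \<Rightarrow> real) \<Rightarrow> conf" where
  "process2 q x \<tau> s \<omega> =
     (let \<eta>' = foldl (\<lambda>\<eta> T. L_step q x T (Uvar \<omega>) \<eta>) (\<lambda>z. z) (rev [1..<Suc \<tau>])
      in foldl (\<lambda>\<eta> (i, a). W_step q 1 a (Vvar \<omega> i) \<eta>) \<eta>' (rev (zip [0..<length s] s)))"

definition unif_space :: "(nat + int \<times> nat \<Rightarrow> real) measure" where
  "unif_space = PiM UNIV (\<lambda>_. uniform_measure lborel {0..1::real})"

definition conf_space :: "conf measure" where
  "conf_space = PiM UNIV (\<lambda>_. count_space (UNIV :: int set))"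

end

theory Submission
  imports Defs
begin


definition tr :: "int \<Rightarrow> int \<Rightarrow> int" where
  "tr z p = (if p = z then z+1 else if p = z+1 then z else p)"

lemma tr_tr[simp]: "tr z (tr z p) = p"
  by (simp add: tr_def)

lemma tr_comp: "tr z \<circ> tr z = id" by (auto simp: fun_eq_iff)

lemma bij_tr[simp]: "bij (tr z)"
  by (metis bij_betw_imageI inj_on_inverseI surj_def tr_tr)

lemma inv_tr[simp]: "inv (tr z) = tr z"
  by (metis inv_unique_comp tr_comp)

lemma swap_conf_tr: "swap_conf z \<eta> = \<eta> \<circ> tr z"
  by (auto simp: swap_conf_def tr_def fun_eq_iff)

definition psw :: "real \<Rightarrow> real \<Rightarrow> int \<Rightarrow> conf \<Rightarrow> real" where
  "psw q x z \<eta> = (if \<eta> z < \<eta> (z+1) then x else if \<eta> (z+1) < \<eta> z then q*x else 0)"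

lemma W_step_alt: "W_step q x z u \<eta> = (if u < psw q x z \<eta> then \<eta> \<circ> tr z else \<eta>)"
  by (auto simp: W_step_def psw_def swap_conf_tr[symmetric] swap_conf_def fun_eq_iff)

lemma psw_01: "0 \<le> q \<Longrightarrow> q \<le> 1 \<Longrightarrow> 0 \<le> x \<Longrightarrow> x \<le> 1 \<Longrightarrow> 0 \<le> psw q x z \<eta> \<and> psw q x z \<eta> \<le> 1"
  by (auto simp: psw_def mult_le_one)

definition rt :: "real \<Rightarrow> real \<Rightarrow> int \<Rightarrow> conf \<Rightarrow> conf pmf" where
  "rt q x z \<eta> = bind_pmf (bernoulli_pmf (psw q x z \<eta>)) (\<lambda>b. return_pmf (if b then \<eta> \<circ> tr z else \<eta>))"

definition lt :: "real \<Rightarrow> real \<Rightarrow> int \<Rightarrow> conf \<Rightarrow> conf pmf" where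
  "lt q x a \<pi> = bind_pmf (bernoulli_pmf (psw q x a (inv \<pi>))) (\<lambda>b. return_pmf (if b then tr a \<circ> \<pi> else \<pi>))"

fun RTp :: "real \<Rightarrow> ('k \<times> int \<times> real) list \<Rightarrow> conf \<Rightarrow> conf pmf" where
  "RTp q [] \<eta> = return_pmf \<eta>"
| "RTp q ((k,z,x)#ops) \<eta> = bind_pmf (rt q x z \<eta>) (RTp q ops)"

fun LTp :: "real \<Rightarrow> ('k \<times> int \<times> real) list \<Rightarrow> conf \<Rightarrow> conf pmf" where
  "LTp q [] \<eta> = return_pmf \<eta>"
| "LTp q ((k,z,x)#ops) \<eta> = bind_pmf (lt q x z \<eta>) (LTp q ops)"

lemma set_rt: "\<eta>' \<in> set_pmf (rt q x z \<eta>) \<Longrightarrow> \<eta>' = \<eta> \<or> \<eta>' = \<eta> \<circ> tr z"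
  by (auto simp: rt_def split: if_splits)

lemma set_lt: "\<eta>' \<in> set_pmf (lt q x z \<eta>) \<Longrightarrow> \<eta>' = \<eta> \<or> \<eta>' = tr z \<circ> \<eta>"
  by (auto simp: lt_def split: if_splits)

lemma bij_rt: "bij \<eta> \<Longrightarrow> \<eta>' \<in> set_pmf (rt q x z \<eta>) \<Longrightarrow> bij \<eta>'"
  using set_rt bij_comp bij_tr by blast

lemma bij_lt: "bij \<eta> \<Longrightarrow> \<eta>' \<in> set_pmf (lt q x z \<eta>) \<Longrightarrow> bij \<eta>'"
  using set_lt bij_comp bij_tr by blast

lemma map_inv_rt: "bij \<eta> \<Longrightarrow> map_pmf inv (rt q x z \<eta>) = lt q x z (inv \<eta>)"
  unfolding rt_def lt_def map_bind_pmf
  by (intro bind_pmf_cong) (auto simp: inv_inv_eq o_inv_distrib map_return_pmf)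

lemma map_inv_RTp: "bij \<eta> \<Longrightarrow> map_pmf inv (RTp q ops \<eta>) = LTp q ops (inv \<eta>)"
proof (induction ops arbitrary: \<eta>)
  case Nil
  then show ?case by simp
next
  case (Cons op ops)
  obtain k z x where o: "op = (k,z,x)" by (cases op) auto
  have "map_pmf inv (RTp q (op#ops) \<eta>) = bind_pmf (rt q x z \<eta>) (\<lambda>\<eta>'. map_pmf inv (RTp q ops \<eta>'))"
    by (simp add: o map_bind_pmf)
  also have "\<dots> = bind_pmf (rt q x z \<eta>) (\<lambda>\<eta>'. LTp q ops (inv \<eta>'))"
    using Cons bij_rt by (intro bind_pmf_cong) auto
  also have "\<dots> = bind_pmf (map_pmf inv (rt q x z \<eta>)) (LTp q ops)"
    by (simp add: bind_map_pmf)
  also have "\<dots> = LTp q (op#ops) (inv \<eta>)"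
    using Cons by (simp add: o map_inv_rt)
  finally show ?case .
qed

lemma tr_less: "\<not>(p = z \<and> p' = z+1) \<Longrightarrow> \<not>(p = z+1 \<and> p' = z) \<Longrightarrow> (tr z p < tr z p') = (p < p')"
  by (auto simp: tr_def)

lemma tr_eq_iff[simp]: "(tr z p = tr z p') = (p = p')"
  by (metis tr_tr)

lemma psw_left_nonint:
  assumes "\<not>(\<pi> z = a \<and> \<pi> (z+1) = a+1)" "\<not>(\<pi> z = a+1 \<and> \<pi> (z+1) = a)"
  shows "psw q x z (tr a \<circ> \<pi>) = psw q x z \<pi>"
  using tr_less[of "\<pi> z" a "\<pi> (z+1)"] tr_less[of "\<pi> (z+1)" a "\<pi> z"] assms
  by (auto simp: psw_def)

lemma psw_right_nonint:
  assumes "bij \<pi>" "\<not>(\<pi> z = a \<and> \<pi> (z+1) = a+1)" "\<not>(\<pi> z = a+1 \<and> \<pi> (z+1) = a)"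
  shows "psw q y a (inv (\<pi> \<circ> tr z)) = psw q y a (inv \<pi>)"
proof -
  have i: "inv (\<pi> \<circ> tr z) = tr z \<circ> inv \<pi>" using assms(1) by (simp add: o_inv_distrib)
  have "\<not>(inv \<pi> a = z \<and> inv \<pi> (a+1) = z+1)" "\<not>(inv \<pi> a = z+1 \<and> inv \<pi> (a+1) = z)"
    using assms by (metis bij_inv_eq_iff)+
  then show ?thesis
    using tr_less[of "inv \<pi> a" z "inv \<pi> (a+1)"] tr_less[of "inv \<pi> (a+1)" z "inv \<pi> a"]
    by (auto simp: psw_def i)
qed

lemma pmf_bind_bern:
  assumes "0 \<le> p" "p \<le> 1"
  shows "pmf (bind_pmf (bernoulli_pmf p) f) i = p * pmf (f True) i + (1-p) * pmf (f False) i"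
  unfolding pmf_bind
  by (subst integral_measure_pmf_real[where A=UNIV]) (auto simp: UNIV_bool assms)

lemma comm_rt_lt:
  assumes "bij \<pi>" "0 \<le> q" "q \<le> 1" "0 \<le> x" "x \<le> 1" "0 \<le> y" "y \<le> 1"
  shows "bind_pmf (rt q x z \<pi>) (lt q y a) = bind_pmf (lt q y a \<pi>) (rt q x z)"
proof (cases "(\<pi> z = a \<and> \<pi> (z+1) = a+1) \<or> (\<pi> z = a+1 \<and> \<pi> (z+1) = a)")
  case False
  then have n1: "\<not>(\<pi> z = a \<and> \<pi> (z+1) = a+1)" "\<not>(\<pi> z = a+1 \<and> \<pi> (z+1) = a)" by auto
  have "bind_pmf (rt q x z \<pi>) (lt q y a) =
     bind_pmf (bernoulli_pmf (psw q x z \<pi>)) (\<lambda>b. bind_pmf (bernoulli_pmf (psw q y a (inv \<pi>)))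
       (\<lambda>c. return_pmf (if c then tr a \<circ> (if b then \<pi> \<circ> tr z else \<pi>) else (if b then \<pi> \<circ> tr z else \<pi>))))"
    unfolding rt_def lt_def bind_assoc_pmf bind_return_pmf
    by (intro bind_pmf_cong refl) (auto simp: psw_right_nonint[OF assms(1) n1])
  also have "\<dots> = bind_pmf (bernoulli_pmf (psw q y a (inv \<pi>))) (\<lambda>c. bind_pmf (bernoulli_pmf (psw q x z \<pi>))
       (\<lambda>b. return_pmf (if b then (if c then tr a \<circ> \<pi> else \<pi>) \<circ> tr z else (if c then tr a \<circ> \<pi> else \<pi>))))"
    by (subst bind_commute_pmf) (intro bind_pmf_cong refl, auto simp: o_assoc)
  also have "\<dots> = bind_pmf (lt q y a \<pi>) (rt q x z)"
    unfolding rt_def lt_def bind_assoc_pmf bind_return_pmf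
    by (intro bind_pmf_cong refl) (auto simp: psw_left_nonint[OF n1])
  finally show ?thesis .
next
  case True
  define \<pi>' where "\<pi>' = \<pi> \<circ> tr z"
  have inj: "inj \<pi>" using assms(1) bij_is_inj by blast
  have e1: "tr a \<circ> \<pi> = \<pi>'"
  proof
    fix w show "(tr a \<circ> \<pi>) w = \<pi>' w"
      using True inj[THEN injD, of w z] inj[THEN injD, of w "z+1"]
      by (auto simp: \<pi>'_def tr_def)
  qed
  have e2: "tr a \<circ> \<pi>' = \<pi>"
    by (metis e1 comp_assoc tr_comp id_comp)
  have e3: "\<pi>' \<circ> tr z = \<pi>"
    by (simp add: \<pi>'_def comp_assoc tr_comp)
  have ne: "\<pi>' \<noteq> \<pi>"
  proof
    assume "\<pi>' = \<pi>" then have "\<pi>' z = \<pi> z" by simp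
    then show False using True by (auto simp: \<pi>'_def tr_def)
  qed
  have ip: "inv \<pi>' = tr z \<circ> inv \<pi>" using assms(1) by (simp add: \<pi>'_def o_inv_distrib)
  have P01: "0 \<le> psw q x z \<eta> \<and> psw q x z \<eta> \<le> 1" "0 \<le> psw q y a \<eta> \<and> psw q y a \<eta> \<le> 1" for \<eta>
    using psw_01 assms by auto
  have key: "psw q x z \<pi> * psw q y a (inv \<pi>') = psw q y a (inv \<pi>) * psw q x z \<pi>'"
    using True
  proof
    assume h: "\<pi> z = a \<and> \<pi> (z+1) = a+1"
    then have "inv \<pi> a = z" "inv \<pi> (a+1) = z+1" using inj by (auto simp: inv_f_eq)
    then have "inv \<pi>' a = z+1" "inv \<pi>' (a+1) = z" by (auto simp: ip tr_def)
    moreover have "\<pi>' z = a+1" "\<pi>' (z+1) = a" using h by (auto simp: \<pi>'_def tr_def)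
    ultimately show ?thesis using h \<open>inv \<pi> a = z\<close> \<open>inv \<pi> (a+1) = z+1\<close> by (simp add: psw_def)
  next
    assume h: "\<pi> z = a+1 \<and> \<pi> (z+1) = a"
    then have "inv \<pi> a = z+1" "inv \<pi> (a+1) = z" using inj by (auto simp: inv_f_eq)
    then have "inv \<pi>' a = z" "inv \<pi>' (a+1) = z+1" by (auto simp: ip tr_def)
    moreover have "\<pi>' z = a" "\<pi>' (z+1) = a+1" using h by (auto simp: \<pi>'_def tr_def)
    ultimately show ?thesis using h \<open>inv \<pi> a = z+1\<close> \<open>inv \<pi> (a+1) = z\<close> by (simp add: psw_def)
  qed
  show ?thesis
  proof (rule pmf_eqI)
    fix i
    show "pmf (bind_pmf (rt q x z \<pi>) (lt q y a)) i = pmf (bind_pmf (lt q y a \<pi>) (rt q x z)) i"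
      unfolding rt_def lt_def bind_assoc_pmf bind_return_pmf
      using P01 ne key
      apply (simp add: pmf_bind_bern e1 e2 e3 flip: \<pi>'_def)
      apply (cases "i = \<pi>"; cases "i = \<pi>'")
      apply (auto simp: indicator_def algebra_simps)
      done
  qed
qed

definition okops :: "real \<Rightarrow> ('k \<times> int \<times> real) list \<Rightarrow> bool" where
  "okops q ops = (0 \<le> q \<and> q \<le> 1 \<and> (\<forall>(k,z,x)\<in>set ops. 0 \<le> x \<and> x \<le> 1))"

lemma LTp_Nil': "LTp q [] = return_pmf" by (rule ext) simp
lemma RTp_Nil': "RTp q [] = return_pmf" by (rule ext) simp

lemma bij_RTp: "bij \<eta> \<Longrightarrow> \<eta>' \<in> set_pmf (RTp q ops \<eta>) \<Longrightarrow> bij \<eta>'"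
  by (induction q ops \<eta> rule: RTp.induct) (auto dest: bij_rt)

lemma comm_RTp_lt:
  assumes "bij \<pi>" "okops q ops" "0 \<le> y" "y \<le> 1"
  shows "bind_pmf (RTp q ops \<pi>) (lt q y a) = bind_pmf (lt q y a \<pi>) (RTp q ops)"
  using assms(1,2)
proof (induction ops arbitrary: \<pi>)
  case Nil
  then show ?case by (simp add: bind_return_pmf bind_return_pmf' RTp_Nil')
next
  case (Cons op ops)
  obtain k z x where o: "op = (k,z,x)" by (cases op) auto
  have ok: "okops q ops" "0 \<le> x" "x \<le> 1" "0 \<le> q" "q \<le> 1" using Cons.prems by (auto simp: okops_def o)
  have "bind_pmf (RTp q (op#ops) \<pi>) (lt q y a) = bind_pmf (rt q x z \<pi>) (\<lambda>\<pi>1. bind_pmf (RTp q ops \<pi>1) (lt q y a))"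
    by (simp add: o bind_assoc_pmf)
  also have "\<dots> = bind_pmf (rt q x z \<pi>) (\<lambda>\<pi>1. bind_pmf (lt q y a \<pi>1) (RTp q ops))"
    using Cons.IH ok bij_rt Cons.prems(1) by (intro bind_pmf_cong[OF refl]) auto
  also have "\<dots> = bind_pmf (bind_pmf (rt q x z \<pi>) (lt q y a)) (RTp q ops)"
    by (simp add: bind_assoc_pmf)
  also have "\<dots> = bind_pmf (bind_pmf (lt q y a \<pi>) (rt q x z)) (RTp q ops)"
    using comm_rt_lt[OF Cons.prems(1)] ok assms(3,4) by simp
  also have "\<dots> = bind_pmf (lt q y a \<pi>) (RTp q (op#ops))"
    by (simp add: o bind_assoc_pmf cong: bind_pmf_cong)
  finally show ?case .
qed


lemma LTp_snoc: "LTp q (ops @ [(k,z,x)]) \<pi> = bind_pmf (LTp q ops \<pi>) (lt q x z)"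
  by (induction q ops \<pi> rule: LTp.induct)
     (auto simp: bind_assoc_pmf bind_return_pmf bind_return_pmf' LTp_Nil' intro!: bind_pmf_cong)

lemma lt_id: "lt q x a id = rt q x a id"
  unfolding lt_def rt_def inv_id comp_id id_comp ..

lemma LTp_id: "okops q ops \<Longrightarrow> LTp q ops id = RTp q (rev ops) id"
proof (induction ops rule: rev_induct)
  case Nil
  then show ?case by simp
next
  case (snoc op ops)
  obtain k z x where o: "op = (k,z,x)" by (cases op) auto
  have ok: "okops q ops" "0 \<le> x" "x \<le> 1" using snoc.prems by (auto simp: okops_def o)
  have "LTp q (ops @ [op]) id = bind_pmf (RTp q (rev ops) id) (lt q x z)"
    by (simp only: o LTp_snoc snoc.IH[OF ok(1)])
  also have "\<dots> = bind_pmf (lt q x z id) (RTp q (rev ops))"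
    using ok by (intro comm_RTp_lt) (auto simp: okops_def)
  also have "\<dots> = RTp q (rev (ops @ [op])) id"
    by (simp add: o lt_id)
  finally show ?case .
qed

lemma core_pmf: "okops q ops \<Longrightarrow> map_pmf inv (RTp q (rev ops) id) = RTp q ops id"
  using map_inv_RTp[of id q "rev ops"] LTp_id[of q "rev ops"]
  by (simp add: okops_def)



lemma prob_bind_bern:
  assumes "0 \<le> p" "p \<le> 1"
  shows "measure_pmf.prob (bind_pmf (bernoulli_pmf p) f) B
       = p * measure_pmf.prob (f True) B + (1-p) * measure_pmf.prob (f False) B"
proof -
  have "emeasure (measure_pmf (bind_pmf (bernoulli_pmf p) f)) B
     = ennreal p * emeasure (measure_pmf (f True)) B + ennreal (1-p) * emeasure (measure_pmf (f False)) B"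
    using assms by (simp add: nn_integral_measure_pmf nn_integral_count_space_finite UNIV_bool)
  also have "\<dots> = ennreal (p * measure_pmf.prob (f True) B + (1-p) * measure_pmf.prob (f False) B)"
    using assms by (simp add: measure_pmf.emeasure_eq_measure ennreal_mult ennreal_plus)
  finally have "ennreal (measure_pmf.prob (bind_pmf (bernoulli_pmf p) f) B) =
      ennreal (p * measure_pmf.prob (f True) B + (1-p) * measure_pmf.prob (f False) B)"
    by (simp add: measure_pmf.emeasure_eq_measure)
  then show ?thesis
    using assms by (subst (asm) ennreal_inj) auto
qed

definition Uunif :: "real measure" where "Uunif = uniform_measure lborel {0..1::real}"

lemma unif_space_alt: "unif_space = PiM UNIV (\<lambda>_. Uunif)"
  by (simp add: unif_space_def Uunif_def)

lemma prob_Uunif: "prob_space Uunif"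
  unfolding Uunif_def by (rule prob_space_uniform_measure) auto

lemma space_Uunif[simp]: "space Uunif = UNIV"
  by (simp add: Uunif_def)

lemma sets_Uunif[simp]: "sets Uunif = sets borel"
  by (simp add: Uunif_def)

lemma prob_unif: "prob_space unif_space"
  unfolding unif_space_alt by (rule prob_space_PiM) (rule prob_Uunif)

interpretation U: prob_space unif_space by (rule prob_unif)

lemma space_unif[simp]: "space unif_space = UNIV"
  by (simp add: unif_space_alt space_PiM)

lemma UNIV_unif[simp]: "UNIV \<in> sets unif_space"
  by (metis space_unif sets.top)

lemma prob_UNIV_unif[simp]: "measure unif_space UNIV = 1"
  by (metis space_unif U.prob_space)

lemma measure_Uunif_less:
  assumes "0 \<le> c" "c \<le> 1"
  shows "measure Uunif {..<c} = c"
proof -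
  have "{0..1::real} \<inter> {..<c} = {0..<c}" using assms by auto
  then show ?thesis using assms by (simp add: Uunif_def)
qed

lemma measure_Uunif_ge:
  assumes "0 \<le> c" "c \<le> 1"
  shows "measure Uunif (- {..<c}) = 1 - c"
proof -
  interpret P: prob_space Uunif by (rule prob_Uunif)
  show ?thesis
    using P.prob_compl[of "{..<c}"] measure_Uunif_less[OF assms]
    by (simp add: Compl_eq_Diff_UNIV)
qed

lemma coord_meas: "X \<in> sets borel \<Longrightarrow> {w. w k \<in> X} \<in> sets unif_space"
proof -
  assume X: "X \<in> sets borel"
  have "(\<lambda>w. w k) \<in> measurable unif_space Uunif"
    unfolding unif_space_alt by (rule measurable_component_singleton) simp
  from measurable_sets[OF this, of X] X show ?thesis by (simp add: vimage_def)
qed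

lemma indep_coord:
  assumes E: "E \<in> sets unif_space" and inv: "\<And>w r. (w(k:=r) \<in> E) = (w \<in> E)"
    and X: "X \<in> sets borel"
  shows "measure unif_space ({w. w k \<in> X} \<inter> E) = measure Uunif X * measure unif_space E"
proof -
  define I where "I = UNIV - {k}"
  define PP where "PP = PiM I (\<lambda>_. Uunif)"
  define D where "D = Uunif \<Otimes>\<^sub>M PP"
  define g where "g = (\<lambda>(x::real, X::nat + int \<times> nat \<Rightarrow> real). X(k:=x))"
  interpret P: prob_space Uunif by (rule prob_Uunif)
  interpret Pi: prob_space PP unfolding PP_def by (rule prob_space_PiM) (rule prob_Uunif)
  have ins: "insert k I = UNIV" by (auto simp: I_def)
  have eqD: "distr D unif_space g = unif_space"
    using distr_pair_PiM_eq_PiM[of I "\<lambda>_. Uunif" k] prob_Uunif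
    by (simp add: D_def PP_def g_def ins unif_space_alt)
  have gm: "g \<in> measurable D unif_space"
  proof -
    have "(\<lambda>x. (snd x)(k := fst x)) \<in> measurable D (PiM UNIV (\<lambda>_. Uunif))"
      by (rule measurable_fun_upd[where J=I]) (auto simp: I_def D_def PP_def)
    moreover have "g = (\<lambda>x. (snd x)(k := fst x))" by (auto simp: g_def fun_eq_iff)
    ultimately show ?thesis by (simp add: unif_space_alt)
  qed
  have em: "emeasure unif_space S = emeasure D (g -` S \<inter> space D)" if "S \<in> sets unif_space" for S
    using that gm by (metis eqD emeasure_distr)
  define E' where "E' = {Y \<in> space PP. Y(k:=0) \<in> E}"
  have E'm: "E' \<in> sets PP"
  proof -
    have "(\<lambda>Y. (id Y)(k := (\<lambda>_. 0::real) Y)) \<in> measurable PP (PiM UNIV (\<lambda>_. Uunif))"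
      by (rule measurable_fun_upd[where J=I]) (auto simp: I_def PP_def)
    then have "(\<lambda>Y. Y(k := 0)) \<in> measurable PP unif_space" by (simp add: unif_space_alt)
    from measurable_sets[OF this E] show ?thesis by (simp add: E'_def vimage_def Int_def conj_commute)
  qed
  have pre: "g -` (Y \<inter> E) \<inter> space D = (if True then Z else Z) \<times> E'" if "Y = {w. w k \<in> Z}" for Y Z
  proof -
    have h: "X'(k:=x) \<in> E \<longleftrightarrow> X'(k:=0) \<in> E" for X' x
      using inv[of "X'(k:=0)" x] by simp
    show ?thesis using that by (auto simp: g_def D_def space_pair_measure E'_def intro: iffD2[OF h] dest: iffD1[OF h])
  qed
  have "emeasure unif_space ({w. w k \<in> X} \<inter> E) = emeasure Uunif X * emeasure PP E'"
    using em[of "{w. w k \<in> X} \<inter> E"] pre[of "{w. w k \<in> X}" X] coord_meas[OF X] E X E'm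
    by (simp add: D_def Pi.emeasure_pair_measure_Times)
  moreover have "emeasure unif_space E = emeasure PP E'"
    using em[of "{w. w k \<in> UNIV} \<inter> E"] pre[of "{w. w k \<in> UNIV}" UNIV] E E'm
    by (simp add: D_def Pi.emeasure_pair_measure_Times P.emeasure_space_1[simplified])
  ultimately show ?thesis
    by (simp add: measure_def enn2real_mult)
qed

lemma coord_less[simp]: "{w. w k < c} \<in> sets unif_space"
  using coord_meas[of "{..<c}" k] by simp

lemma coord_ge[simp]: "{w. c \<le> w k} \<in> sets unif_space"
  using coord_meas[of "{c..}" k] by simp

definition Fops :: "real \<Rightarrow> ('k \<times> int \<times> real) list \<Rightarrow> ('k \<Rightarrow> real) \<Rightarrow> conf \<Rightarrow> conf" where
  "Fops q ops w \<eta>0 = foldl (\<lambda>\<eta> (k,z,x). W_step q x z (w k) \<eta>) \<eta>0 ops"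

lemma Fops_Nil[simp]: "Fops q [] w \<eta> = \<eta>" by (simp add: Fops_def)
lemma Fops_Cons[simp]: "Fops q ((k,z,x)#ops) w \<eta> = Fops q ops w (W_step q x z (w k) \<eta>)"
  by (simp add: Fops_def)
lemma Fops_append: "Fops q (xs @ ys) w \<eta> = Fops q ys w (Fops q xs w \<eta>)"
  by (simp add: Fops_def)

lemma Fops_upd: "k \<notin> fst ` set ops \<Longrightarrow> Fops q ops (w(k:=r)) \<eta> = Fops q ops w \<eta>"
  by (induction ops arbitrary: \<eta>) auto

lemma Fops_meas: "{w. Fops q ops w \<eta>0 \<in> B} \<in> sets unif_space"
proof (induction ops arbitrary: \<eta>0)
  case Nil
  then show ?case by (cases "\<eta>0 \<in> B") auto
next
  case (Cons op ops)
  obtain k z x where o: "op = (k,z,x)" by (cases op) auto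
  let ?c = "psw q x z \<eta>0"
  have "{w. Fops q (op#ops) w \<eta>0 \<in> B} =
      ({w. w k \<in> {..<?c}} \<inter> {w. Fops q ops w (\<eta>0 \<circ> tr z) \<in> B}) \<union>
      ({w. w k \<in> - {..<?c}} \<inter> {w. Fops q ops w \<eta>0 \<in> B})"
    by (auto simp: o W_step_alt)
  also have "\<dots> \<in> sets unif_space"
    using Cons by (intro sets.Un sets.Int coord_meas) auto
  finally show ?case .
qed

lemma bridge:
  assumes "distinct (map fst ops)" "okops q ops"
  shows "measure unif_space {w. Fops q ops w \<eta>0 \<in> B} = measure_pmf.prob (RTp q ops \<eta>0) B"
  using assms
proof (induction ops arbitrary: \<eta>0)
  case Nil
  then show ?case by (cases "\<eta>0 \<in> B") auto
next
  case (Cons op ops)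
  obtain k z x where o: "op = (k,z,x)" by (cases op) auto
  have ok: "okops q ops" "0 \<le> x" "x \<le> 1" "0 \<le> q" "q \<le> 1" using Cons.prems by (auto simp: okops_def o)
  have dist: "distinct (map fst ops)" "k \<notin> fst ` set ops" using Cons.prems by (auto simp: o)
  define c where "c = psw q x z \<eta>0"
  have c01: "0 \<le> c" "c \<le> 1" using psw_01 ok by (auto simp: c_def)
  define S1 where "S1 = {w. Fops q ops w (\<eta>0 \<circ> tr z) \<in> B}"
  define S0 where "S0 = {w. Fops q ops w \<eta>0 \<in> B}"
  have inv1: "(w(k:=r) \<in> S1) = (w \<in> S1)" "(w(k:=r) \<in> S0) = (w \<in> S0)" for w r
    by (simp_all add: S1_def S0_def Fops_upd[OF dist(2)])
  have "{w. Fops q (op#ops) w \<eta>0 \<in> B} =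
      ({w. w k \<in> {..<c}} \<inter> S1) \<union> ({w. w k \<in> - {..<c}} \<inter> S0)"
    by (auto simp: o W_step_alt c_def S1_def S0_def)
  then have "measure unif_space {w. Fops q (op#ops) w \<eta>0 \<in> B} =
     measure unif_space ({w. w k \<in> {..<c}} \<inter> S1) + measure unif_space ({w. w k \<in> - {..<c}} \<inter> S0)"
    by (simp, intro U.finite_measure_Union) (auto simp: S1_def S0_def intro!: sets.Int coord_meas Fops_meas)
  also have "\<dots> = c * measure unif_space S1 + (1 - c) * measure unif_space S0"
  proof -
    have a1: "measure unif_space ({w. w k \<in> {..<c}} \<inter> S1) = measure Uunif {..<c} * measure unif_space S1"
      by (rule indep_coord[OF _ inv1(1)]) (auto simp: S1_def Fops_meas)
    have a0: "measure unif_space ({w. w k \<in> - {..<c}} \<inter> S0) = measure Uunif (- {..<c}) * measure unif_space S0"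
      by (rule indep_coord[OF _ inv1(2)]) (auto simp: S0_def Fops_meas)
    show ?thesis by (simp only: a1 a0 measure_Uunif_less[OF c01] measure_Uunif_ge[OF c01])
  qed
  also have "\<dots> = c * measure_pmf.prob (RTp q ops (\<eta>0 \<circ> tr z)) B + (1 - c) * measure_pmf.prob (RTp q ops \<eta>0) B"
    using Cons.IH[OF dist(1) ok(1)] by (simp add: S1_def S0_def comp_def)
  also have "\<dots> = measure_pmf.prob (RTp q (op#ops) \<eta>0) B"
  proof -
    have "RTp q (op#ops) \<eta>0 = bind_pmf (bernoulli_pmf c) (\<lambda>b. RTp q ops (if b then \<eta>0 \<circ> tr z else \<eta>0))"
      by (simp add: o rt_def c_def bind_assoc_pmf bind_return_pmf)
    then show ?thesis using c01 by (simp add: prob_bind_bern)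
  qed
  finally show ?case .
qed



definition pr :: "nat \<Rightarrow> int \<Rightarrow> int" where
  "pr T y = (if y mod 2 = int T mod 2 then y else y - 1)"

lemma pr_cases: "pr T y = y \<or> pr T y = y - 1"
  by (auto simp: pr_def)

lemma pr_par: "pr T y mod 2 = int T mod 2"
  unfolding pr_def by presburger

lemma pr_iff: "z mod 2 = int T mod 2 \<Longrightarrow> (pr T y = z) = (y = z \<or> y = z + 1)"
  unfolding pr_def by presburger

lemma L_step_alt: "L_step q x T U \<eta> y = W_step q (x (pr T y) T) (pr T y) (U (pr T y) T) \<eta> y"
  by (simp add: L_step_def pr_def Let_def)

lemma par_far: "(a::int) mod 2 = c mod 2 \<Longrightarrow> b mod 2 = c mod 2 \<Longrightarrow> a \<noteq> b \<Longrightarrow> a \<noteq> b + 1 \<and> a + 1 \<noteq> b"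
  by presburger

lemma W_step_out: "y \<noteq> z \<Longrightarrow> y \<noteq> z + 1 \<Longrightarrow> W_step q x z u \<eta> y = \<eta> y"
  by (simp add: W_step_alt tr_def)

lemma W_step_local: "\<eta> z = \<eta>' z \<Longrightarrow> \<eta> (z+1) = \<eta>' (z+1) \<Longrightarrow> y = z \<or> y = z + 1 \<Longrightarrow>
    W_step q x z u \<eta> y = W_step q x z u \<eta>' y"
  by (auto simp: W_step_alt tr_def psw_def)

lemma Fops_Lpart:
  assumes "distinct zs" "\<forall>z\<in>set zs. z mod 2 = int T mod 2"
  shows "Fops q (map (\<lambda>z. (Inr (z,T), z, x z T)) zs) w \<eta> y =
     (if pr T y \<in> set zs then W_step q (x (pr T y) T) (pr T y) (w (Inr (pr T y, T))) \<eta> y else \<eta> y)"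
  using assms
proof (induction zs arbitrary: \<eta>)
  case Nil
  then show ?case by simp
next
  case (Cons z0 zs)
  define \<eta>1 where "\<eta>1 = W_step q (x z0 T) z0 (w (Inr (z0, T))) \<eta>"
  have IH: "Fops q (map (\<lambda>z. (Inr (z,T), z, x z T)) zs) w \<eta>1 y =
     (if pr T y \<in> set zs then W_step q (x (pr T y) T) (pr T y) (w (Inr (pr T y, T))) \<eta>1 y else \<eta>1 y)"
    using Cons by auto
  have z0p: "z0 mod 2 = int T mod 2" using Cons.prems by auto
  have L: "Fops q (map (\<lambda>z. (Inr (z,T), z, x z T)) (z0#zs)) w \<eta> y =
      Fops q (map (\<lambda>z. (Inr (z,T), z, x z T)) zs) w \<eta>1 y"
    by (simp add: \<eta>1_def)
  show ?case
  proof (cases "pr T y \<in> set zs")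
    case True
    let ?z = "pr T y"
    have ne: "?z \<noteq> z0" using True Cons.prems by auto
    have zp: "?z mod 2 = int T mod 2" by (rule pr_par)
    have far: "?z \<noteq> z0 \<and> ?z \<noteq> z0 + 1 \<and> ?z + 1 \<noteq> z0 \<and> ?z + 1 \<noteq> z0 + 1"
      using ne par_far[OF zp z0p] by simp
    have "W_step q (x ?z T) ?z (w (Inr (?z, T))) \<eta>1 y = W_step q (x ?z T) ?z (w (Inr (?z, T))) \<eta> y"
    proof (rule W_step_local)
      show "\<eta>1 ?z = \<eta> ?z" unfolding \<eta>1_def by (rule W_step_out) (use far in auto)
      show "\<eta>1 (?z+1) = \<eta> (?z+1)" unfolding \<eta>1_def by (rule W_step_out) (use far in auto)
      show "y = ?z \<or> y = ?z + 1" using pr_cases[of T y] by auto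
    qed
    then show ?thesis using True L IH by simp
  next
    case False
    then show ?thesis
    proof (cases "pr T y = z0")
      case True
      then show ?thesis using False L IH by (simp add: \<eta>1_def)
    next
      case False2: False
      then have "y \<noteq> z0 \<and> y \<noteq> z0 + 1" using pr_iff[OF z0p, of y] by auto
      then show ?thesis using False False2 L IH by (simp add: \<eta>1_def W_step_out)
    qed
  qed
qed

definition agree :: "int \<Rightarrow> conf \<Rightarrow> conf \<Rightarrow> bool" where
  "agree R \<eta> \<eta>' = (\<forall>y. \<bar>y\<bar> \<le> R \<longrightarrow> \<eta> y = \<eta>' y)"

lemma agree_W:
  assumes "agree (R+1) \<eta> \<eta>'"
  shows "agree R (W_step q x a u \<eta>) (W_step q x a u \<eta>')"
  unfolding agree_def
proof (intro allI impI)
  fix y assume y: "\<bar>y\<bar> \<le> R"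
  show "W_step q x a u \<eta> y = W_step q x a u \<eta>' y"
  proof (cases "y = a \<or> y = a + 1")
    case True
    then have "\<bar>a\<bar> \<le> R + 1" "\<bar>a+1\<bar> \<le> R+1" using y by auto
    then show ?thesis using assms True by (intro W_step_local) (auto simp: agree_def)
  next
    case False
    then show ?thesis using assms y by (auto simp: W_step_out agree_def)
  qed
qed

lemma agree_Fops:
  "agree (R + int (length ops)) \<eta> \<eta>' \<Longrightarrow> agree R (Fops q ops w \<eta>) (Fops q ops w \<eta>')"
proof (induction ops arbitrary: \<eta> \<eta>' R)
  case Nil
  then show ?case by simp
next
  case (Cons op ops)
  obtain k z x where o: "op = (k,z,x)" by (cases op) auto
  have "agree (R + int (length ops)) (W_step q x z (w k) \<eta>) (W_step q x z (w k) \<eta>')"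
    using agree_W[of "R + int (length ops)" \<eta> \<eta>'] Cons.prems by (simp add: o ac_simps)
  then show ?case using Cons.IH by (simp add: o)
qed

definition Lz :: "(int \<Rightarrow> nat \<Rightarrow> real) \<Rightarrow> nat \<Rightarrow> int list \<Rightarrow> ((nat + int \<times> nat) \<times> int \<times> real) list" where
  "Lz x T zs = map (\<lambda>z. (Inr (z,T), z, x z T)) zs"

definition goodzs :: "int \<Rightarrow> nat \<Rightarrow> int list \<Rightarrow> bool" where
  "goodzs N T zs = (distinct zs \<and> (\<forall>z\<in>set zs. z mod 2 = int T mod 2) \<and>
      (\<forall>z. \<bar>z\<bar> \<le> N \<and> z mod 2 = int T mod 2 \<longrightarrow> z \<in> set zs))"

lemma agree_L:
  assumes "agree (R+1) \<eta> \<eta>'" "R + 1 \<le> N" "goodzs N T zs"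
  shows "agree R (L_step q x T (Uvar w) \<eta>) (Fops q (Lz x T zs) w \<eta>')"
  unfolding agree_def
proof (intro allI impI)
  fix y assume y: "\<bar>y\<bar> \<le> R"
  define z where zdef: "z = pr T y"
  have zc: "z = y \<or> z = y - 1" using pr_cases[of T y] zdef by simp
  have zN: "\<bar>z\<bar> \<le> N" using zc y assms(2) by linarith
  have zin: "z \<in> set zs"
    using assms(3) zN pr_par[of T y] zdef unfolding goodzs_def by blast
  have a: "\<eta> z = \<eta>' z" "\<eta> (z+1) = \<eta>' (z+1)"
  proof -
    have "\<bar>z\<bar> \<le> R + 1" "\<bar>z+1\<bar> \<le> R + 1" using zc y by linarith+
    then show "\<eta> z = \<eta>' z" "\<eta> (z+1) = \<eta>' (z+1)" using assms(1) unfolding agree_def by blast+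
  qed
  have yz: "y = z \<or> y = z + 1" using zc by linarith
  have "Fops q (Lz x T zs) w \<eta>' y = W_step q (x z T) z (w (Inr (z, T))) \<eta>' y"
  proof -
    have g: "distinct zs" "\<forall>z\<in>set zs. z mod 2 = int T mod 2" using assms(3) unfolding goodzs_def by blast+
    show ?thesis unfolding Lz_def Fops_Lpart[OF g] zdef[symmetric] using zin by simp
  qed
  also have "\<dots> = W_step q (x z T) z (w (Inr (z, T))) \<eta> y"
    using a yz by (intro W_step_local) auto
  finally show "L_step q x T (Uvar w) \<eta> y = Fops q (Lz x T zs) w \<eta>' y"
    by (simp add: L_step_alt Uvar_def zdef)
qed



definition sops :: "int list \<Rightarrow> ((nat + int \<times> nat) \<times> int \<times> real) list" where
  "sops s = map (\<lambda>(i,a). (Inl i, a, 1)) (zip [0..<length s] s)"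

definition zsT :: "int \<Rightarrow> nat \<Rightarrow> int list" where
  "zsT N T = filter (\<lambda>z. z mod 2 = int T mod 2) [-N..N]"

definition ops1 :: "(int \<Rightarrow> nat \<Rightarrow> real) \<Rightarrow> nat \<Rightarrow> int list \<Rightarrow> int \<Rightarrow> ((nat + int \<times> nat) \<times> int \<times> real) list" where
  "ops1 x \<tau> s N = sops s @ concat (map (\<lambda>T. Lz x T (zsT N T)) [1..<Suc \<tau>])"

lemma goodzs_zsT: "goodzs N T (zsT N T)"
  by (auto simp: goodzs_def zsT_def)

lemma goodzs_rev_zsT: "goodzs N T (rev (zsT N T))"
  by (auto simp: goodzs_def zsT_def)

lemma s_fold: "foldl (\<lambda>\<eta> (i,a). W_step q 1 a (Vvar w i) \<eta>) \<eta>0 xs = Fops q (map (\<lambda>(i,a). (Inl i, a, 1)) xs) w \<eta>0"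
  by (induction xs arbitrary: \<eta>0) (auto simp: Vvar_def)

lemma agree_refl[simp]: "agree R \<eta> \<eta>"
  by (simp add: agree_def)

lemma L_fold:
  assumes "\<forall>T\<in>set Ts. goodzs N T (zs T)" "agree (R + int (length Ts)) \<eta> \<eta>'" "R + int (length Ts) \<le> N"
  shows "agree R (foldl (\<lambda>\<eta> T. L_step q x T (Uvar w) \<eta>) \<eta> Ts) (Fops q (concat (map (\<lambda>T. Lz x T (zs T)) Ts)) w \<eta>')"
  using assms
proof (induction Ts arbitrary: \<eta> \<eta>' R)
  case Nil
  then show ?case by simp
next
  case (Cons T Ts)
  have h: "agree (R + int (length Ts)) (L_step q x T (Uvar w) \<eta>) (Fops q (Lz x T (zs T)) w \<eta>')"
    using Cons.prems by (intro agree_L) (auto simp: ac_simps)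
  have "agree R (foldl (\<lambda>\<eta> T. L_step q x T (Uvar w) \<eta>) (L_step q x T (Uvar w) \<eta>) Ts)
     (Fops q (concat (map (\<lambda>T. Lz x T (zs T)) Ts)) w (Fops q (Lz x T (zs T)) w \<eta>'))"
    by (rule Cons.IH) (use Cons.prems h in auto)
  then show ?case by (simp add: Fops_append)
qed

lemma process1_agree:
  assumes "int \<tau> \<le> N"
  shows "agree (N - int \<tau>) (process1 q x \<tau> s w) (Fops q (ops1 x \<tau> s N) w id)"
proof -
  have e: "(\<lambda>z::int. z) = id" by (simp add: id_def)
  show ?thesis
    unfolding process1_def Let_def ops1_def Fops_append e s_fold sops_def[symmetric]
    using L_fold[of "[1..<Suc \<tau>]" N "zsT N" "N - int \<tau>"] assms
    by (simp add: goodzs_zsT sops_def)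
qed

lemma rev_ops1: "rev (ops1 x \<tau> s N) = concat (map (\<lambda>T. Lz x T (rev (zsT N T))) (rev [1..<Suc \<tau>])) @ rev (sops s)"
  by (simp add: ops1_def rev_concat rev_map Lz_def o_def)

lemma process2_agree:
  assumes "int \<tau> + int (length s) \<le> N"
  shows "agree (N - int \<tau> - int (length s)) (process2 q x \<tau> s w) (Fops q (rev (ops1 x \<tau> s N)) w id)"
proof -
  have e: "(\<lambda>z::int. z) = id" by (simp add: id_def)
  have a1: "agree (N - int \<tau>) (foldl (\<lambda>\<eta> T. L_step q x T (Uvar w) \<eta>) id (rev [1..<Suc \<tau>]))
      (Fops q (concat (map (\<lambda>T. Lz x T (rev (zsT N T))) (rev [1..<Suc \<tau>]))) w id)"
    using L_fold[of "rev [1..<Suc \<tau>]" N "\<lambda>T. rev (zsT N T)" "N - int \<tau>"] assms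
    by (simp add: goodzs_rev_zsT)
  have rs: "rev (sops s) = map (\<lambda>(i,a). (Inl i, a, 1)) (rev (zip [0..<length s] s))"
    by (simp add: sops_def rev_map)
  show ?thesis
    unfolding process2_def Let_def rev_ops1 Fops_append e s_fold rs[symmetric]
    using agree_Fops[of "N - int \<tau> - int (length s)" "rev (sops s)"] a1
    by (simp add: sops_def)
qed

definition disp :: "int \<Rightarrow> conf \<Rightarrow> bool" where
  "disp d \<eta> = (\<forall>y. \<bar>\<eta> y - y\<bar> \<le> d)"

definition near :: "conf \<Rightarrow> conf \<Rightarrow> bool" where
  "near \<eta> \<eta>' = (\<forall>y. \<exists>y'. \<bar>y' - y\<bar> \<le> 1 \<and> \<eta>' y = \<eta> y')"

lemma near_disp: "near \<eta> \<eta>' \<Longrightarrow> disp d \<eta> \<Longrightarrow> disp (d+1) \<eta>'"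
  unfolding near_def disp_def
proof (intro allI)
  fix y assume a: "\<forall>y. \<exists>y'. \<bar>y' - y\<bar> \<le> 1 \<and> \<eta>' y = \<eta> y'" and b: "\<forall>y. \<bar>\<eta> y - y\<bar> \<le> d"
  then obtain y' where "\<bar>y' - y\<bar> \<le> 1" "\<eta>' y = \<eta> y'" by blast
  moreover have "\<bar>\<eta> y' - y'\<bar> \<le> d" using b by blast
  ultimately show "\<bar>\<eta>' y - y\<bar> \<le> d + 1" by linarith
qed

lemma near_W: "near \<eta> (W_step q x z u \<eta>)"
  unfolding near_def
proof
  fix y
  show "\<exists>y'. \<bar>y' - y\<bar> \<le> 1 \<and> W_step q x z u \<eta> y = \<eta> y'"
  proof (cases "u < psw q x z \<eta>")
    case True
    then show ?thesis by (intro exI[of _ "tr z y"]) (auto simp: W_step_alt tr_def)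
  next
    case False
    then show ?thesis by (intro exI[of _ y]) (auto simp: W_step_alt)
  qed
qed

lemma near_L: "near \<eta> (L_step q x T U \<eta>)"
  using near_W unfolding near_def L_step_alt by blast

lemma foldl_disp:
  assumes "\<And>\<eta> a. near \<eta> (f \<eta> a)" "disp d \<eta>"
  shows "disp (d + int (length xs)) (foldl f \<eta> xs)"
  using assms(2)
proof (induction xs arbitrary: \<eta> d)
  case Nil
  then show ?case by simp
next
  case (Cons a xs)
  have "disp (d+1) (f \<eta> a)" using near_disp[OF assms(1) Cons.prems] .
  then show ?case using Cons.IH[of "d+1" "f \<eta> a"] by (simp add: ac_simps)
qed

lemma foldl_bij:
  assumes "\<And>\<eta> a. bij \<eta> \<Longrightarrow> bij (f \<eta> a)" "bij \<eta>"
  shows "bij (foldl f \<eta> xs)"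
  using assms(2) by (induction xs arbitrary: \<eta>) (auto intro: assms(1))

lemma W_bij: "bij \<eta> \<Longrightarrow> bij (W_step q x z u \<eta>)"
  by (simp add: W_step_alt bij_comp)

lemma L_bij:
  assumes "bij \<eta>"
  shows "bij (L_step q x T U \<eta>)"
proof -
  define c where "c z = (U z T < psw q (x z T) z \<eta>)" for z
  define \<sigma> where "\<sigma> y = (if c (pr T y) then tr (pr T y) y else y)" for y
  have L: "L_step q x T U \<eta> = \<eta> \<circ> \<sigma>"
    by (auto simp: fun_eq_iff L_step_alt W_step_alt \<sigma>_def c_def)
  have pp: "pr T (tr (pr T y) y) = pr T y" for y
  proof -
    have "tr (pr T y) y = pr T y \<or> tr (pr T y) y = pr T y + 1"
      using pr_cases[of T y] by (auto simp: tr_def)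
    then show ?thesis using pr_iff[OF pr_par[of T y]] by blast
  qed
  have "\<sigma> \<circ> \<sigma> = id"
    by (auto simp: fun_eq_iff \<sigma>_def pp)
  then have "bij \<sigma>" using o_bij by blast
  then show ?thesis using L assms bij_comp by metis
qed

lemma Fops_bij: "bij \<eta> \<Longrightarrow> bij (Fops q ops w \<eta>)"
  unfolding Fops_def by (rule foldl_bij) (auto intro: W_bij)

lemma process1_bij: "bij (process1 q x \<tau> s w)"
  unfolding process1_def Let_def
  by (intro foldl_bij L_bij) (auto intro: W_bij simp: bij_id[unfolded id_def])

lemma process2_bij: "bij (process2 q x \<tau> s w)"
  unfolding process2_def Let_def
  by (intro foldl_bij L_bij) (auto intro: W_bij L_bij simp: bij_id[unfolded id_def])

lemma process2_disp: "disp (int \<tau> + int (length s)) (process2 q x \<tau> s w)"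
proof -
  have d0: "disp 0 (\<lambda>z. z)" by (simp add: disp_def)
  have "disp (0 + int (length (rev [1..<Suc \<tau>]))) (foldl (\<lambda>\<eta> T. L_step q x T (Uvar w) \<eta>) (\<lambda>z. z) (rev [1..<Suc \<tau>]))"
    by (rule foldl_disp[OF near_L d0])
  moreover have l: "length (rev [1..<Suc \<tau>]) = \<tau>" by simp
  ultimately have "disp (int \<tau>) (foldl (\<lambda>\<eta> T. L_step q x T (Uvar w) \<eta>) (\<lambda>z. z) (rev [1..<Suc \<tau>]))"
    by (simp only: l add_0_left)
  then have "disp (int \<tau> + int (length (rev (zip [0..<length s] s)))) (process2 q x \<tau> s w)"
    unfolding process2_def Let_def
    by (intro foldl_disp) (auto simp: near_W)
  then show ?thesis by simp
qed

lemma process1_eq: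
  assumes "\<bar>y\<bar> \<le> N - int \<tau>"
  shows "process1 q x \<tau> s w y = Fops q (ops1 x \<tau> s N) w id y"
  using process1_agree[of \<tau> N q x s w] assms unfolding agree_def by auto

lemma process2_inv_eq:
  assumes "\<bar>j\<bar> + 2 * (int \<tau> + int (length s)) \<le> N"
  shows "inv (process2 q x \<tau> s w) j = inv (Fops q (rev (ops1 x \<tau> s N)) w id) j"
proof -
  let ?n = "int \<tau> + int (length s)"
  let ?P = "process2 q x \<tau> s w"
  let ?F = "Fops q (rev (ops1 x \<tau> s N)) w id"
  have ag: "agree (N - ?n) ?P ?F" using process2_agree[of \<tau> s N q x w] assms by (simp add: diff_diff_eq)
  have bP: "bij ?P" by (rule process2_bij)
  have bF: "bij ?F" by (intro Fops_bij) simp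
  define p where "p = inv ?P j"
  have Pp: "?P p = j" using bP p_def bij_inv_eq_iff by metis
  have "\<bar>?P p - p\<bar> \<le> ?n" using process2_disp[of \<tau> s q x w] unfolding disp_def by blast
  then have "\<bar>p\<bar> \<le> N - ?n" using Pp assms by (auto simp: abs_if split: if_splits)
  then have "?F p = j" using ag Pp unfolding agree_def by auto
  then have "inv ?F j = p" using bF by (metis bij_inv_eq_iff)
  then show ?thesis by (simp add: p_def)
qed



lemma dist_concat_L:
  "distinct Ts \<Longrightarrow> (\<forall>T. distinct (zs T)) \<Longrightarrow>
   distinct (concat (map (\<lambda>T. map (\<lambda>z. (Inr (z,T) :: nat + int \<times> nat)) (zs T)) Ts))"
proof (induction Ts)
  case Nil
  then show ?case by simp
next
  case (Cons T Ts)
  then show ?case by (auto simp: distinct_map inj_on_def)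
qed

lemma map_fst_zip_gen: "length xs = length ys \<Longrightarrow> map (\<lambda>x. f (fst x)) (zip xs ys) = map f xs"
  by (induction xs ys rule: list_induct2) auto

lemma dist_ops1: "distinct (map fst (ops1 x \<tau> s N))"
proof -
  have a: "map fst (sops s) = map Inl [0..<length s]"
  proof -
    show ?thesis by (simp add: sops_def case_prod_beta o_def map_fst_zip_gen)
  qed
  have b: "map fst (concat (map (\<lambda>T. Lz x T (zsT N T)) [1..<Suc \<tau>])) =
     concat (map (\<lambda>T. map (\<lambda>z. (Inr (z,T) :: nat + int \<times> nat)) (zsT N T)) [1..<Suc \<tau>])"
    by (simp add: map_concat Lz_def o_def)
  have c: "distinct (concat (map (\<lambda>T. map (\<lambda>z. (Inr (z,T) :: nat + int \<times> nat)) (zsT N T)) [1..<Suc \<tau>]))"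
    by (rule dist_concat_L) (auto simp: zsT_def)
  show ?thesis
    unfolding ops1_def map_append a b using c by (auto simp: distinct_map)
qed

lemma ok_ops1:
  assumes "0 \<le> q" "q \<le> 1"
    and "\<And>z T. 1 \<le> T \<Longrightarrow> T \<le> \<tau> \<Longrightarrow> z mod 2 = int T mod 2 \<Longrightarrow> 0 \<le> x z T \<and> x z T < 1"
  shows "okops q (ops1 x \<tau> s N)"
  using assms unfolding okops_def ops1_def
  by (auto simp: sops_def Lz_def zsT_def set_zip less_imp_le)

lemma okops_rev: "okops q (rev ops) = okops q ops"
  by (simp add: okops_def)

lemma Fops_fun_meas: "(\<lambda>w. g (Fops q ops w \<eta>0)) \<in> measurable unif_space (count_space (UNIV :: int set))"
proof -
  have "(\<lambda>w. g (Fops q ops w \<eta>0)) -` {a} \<inter> space unif_space \<in> sets unif_space" for a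
  proof -
    have "(\<lambda>w. g (Fops q ops w \<eta>0)) -` {a} \<inter> space unif_space = {w. Fops q ops w \<eta>0 \<in> g -` {a}}" by auto
    then show ?thesis using Fops_meas[of q ops \<eta>0 "g -` {a}"] by simp
  qed
  then show ?thesis by (simp add: measurable_count_space_eq2_countable)
qed

lemma conf_meas:
  assumes "\<And>y. (\<lambda>w. P w y) \<in> measurable unif_space (count_space UNIV)"
  shows "P \<in> measurable unif_space conf_space"
proof -
  have "(\<lambda>w y. P w y) \<in> measurable unif_space conf_space"
    unfolding conf_space_def by (rule measurable_PiM_single') (auto intro: assms)
  then show ?thesis by simp
qed

lemma sum_abs_bound: "finite J \<Longrightarrow> j \<in> J \<Longrightarrow> \<bar>j::int\<bar> \<le> (\<Sum>i\<in>J. \<bar>i\<bar>)"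
  by (rule member_le_sum) auto

theorem theorem3p2:
  fixes q :: real and \<tau> :: nat and x :: "int \<Rightarrow> nat \<Rightarrow> real" and s :: "int list"
  assumes "0 \<le> q" and "q \<le> 1"
    and "odd \<tau>"
    and "\<And>z T. 1 \<le> T \<Longrightarrow> T \<le> \<tau> \<Longrightarrow> z mod 2 = int T mod 2 \<Longrightarrow> 0 \<le> x z T \<and> x z T < 1"
  shows "(AE \<omega> in unif_space. bij (process1 q x \<tau> s \<omega>))
       \<and> (AE \<omega> in unif_space. bij (process2 q x \<tau> s \<omega>))
       \<and> (\<forall>A \<in> sets conf_space.
            measure unif_space {\<omega> \<in> space unif_space. process1 q x \<tau> s \<omega> \<in> A}
          = measure unif_space {\<omega> \<in> space unif_space. bij (process2 q x \<tau> s \<omega>)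
                                   \<and> inv (process2 q x \<tau> s \<omega>) \<in> A})"
proof -
  let ?P1 = "process1 q x \<tau> s"
  let ?P2 = "\<lambda>w. inv (process2 q x \<tau> s w)"
  let ?n = "int \<tau> + int (length s)"
  have ok: "okops q (ops1 x \<tau> s N)" for N by (rule ok_ops1) (use assms in auto)
  have m1: "?P1 \<in> measurable unif_space conf_space"
  proof (rule conf_meas)
    fix y
    have "(\<lambda>w. ?P1 w y) = (\<lambda>w. (\<lambda>\<eta>. \<eta> y) (Fops q (ops1 x \<tau> s (\<bar>y\<bar> + int \<tau>)) w id))"
      by (rule ext) (simp add: process1_eq)
    then show "(\<lambda>w. ?P1 w y) \<in> measurable unif_space (count_space UNIV)"
      using Fops_fun_meas[of "\<lambda>\<eta>. \<eta> y" q "ops1 x \<tau> s (\<bar>y\<bar> + int \<tau>)" id] by simp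
  qed
  have m2: "?P2 \<in> measurable unif_space conf_space"
  proof (rule conf_meas)
    fix y
    have "(\<lambda>w. ?P2 w y) = (\<lambda>w. (\<lambda>\<eta>. inv \<eta> y) (Fops q (rev (ops1 x \<tau> s (\<bar>y\<bar> + 2 * ?n))) w id))"
      by (rule ext) (simp add: process2_inv_eq)
    then show "(\<lambda>w. ?P2 w y) \<in> measurable unif_space (count_space UNIV)"
      using Fops_fun_meas[of "\<lambda>\<eta>. inv \<eta> y" q "rev (ops1 x \<tau> s (\<bar>y\<bar> + 2 * ?n))" id] by simp
  qed
  define M1 where "M1 = distr unif_space conf_space ?P1"
  define M2 where "M2 = distr unif_space conf_space ?P2"
  have "M1 = M2"
  proof (rule measure_eqI_PiM_infinite[where I=UNIV and M="\<lambda>_. count_space UNIV"])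
    show "sets M1 = sets (PiM UNIV (\<lambda>_. count_space UNIV))" by (simp add: M1_def conf_space_def)
    show "sets M2 = sets (PiM UNIV (\<lambda>_. count_space UNIV))" by (simp add: M2_def conf_space_def)
    show "finite_measure M1" unfolding M1_def by (rule U.finite_measure_distr[OF m1])
  next
    fix A J assume J: "finite (J :: int set)" "J \<subseteq> UNIV" and A: "\<And>i. i \<in> J \<Longrightarrow> (A i :: int set) \<in> sets (count_space UNIV)"
    let ?X = "prod_emb UNIV (\<lambda>_. count_space (UNIV :: int set)) J (Pi\<^sub>E J A)"
    define N where "N = (\<Sum>i\<in>J. \<bar>i\<bar>) + 2 * ?n"
    have jb: "\<bar>j\<bar> + 2 * ?n \<le> N" if "j \<in> J" for j
      using sum_abs_bound[OF J(1) that] by (simp add: N_def)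
    define C where "C = {\<eta>::conf. \<forall>j\<in>J. \<eta> j \<in> A j}"
    have Xs: "?X \<in> sets conf_space"
      unfolding conf_space_def using J by (intro sets_PiM_I) auto
    have pre: "f -` ?X = {w. f w \<in> C}" for f :: "_ \<Rightarrow> conf"
      by (auto simp: prod_emb_def C_def restrict_PiE_iff)
    have e1: "{w. ?P1 w \<in> C} = {w. Fops q (ops1 x \<tau> s N) w id \<in> C}"
    proof -
      have "?P1 w j = Fops q (ops1 x \<tau> s N) w id j" if "j \<in> J" for w j
        by (rule process1_eq) (use jb[OF that] in simp)
      then show ?thesis by (auto simp: C_def)
    qed
    have e2: "{w. ?P2 w \<in> C} = {w. Fops q (rev (ops1 x \<tau> s N)) w id \<in> inv -` C}"
    proof -
      have "?P2 w j = inv (Fops q (rev (ops1 x \<tau> s N)) w id) j" if "j \<in> J" for w j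
        by (rule process2_inv_eq) (use jb[OF that] in simp)
      then show ?thesis by (auto simp: C_def)
    qed
    have "measure unif_space {w. ?P1 w \<in> C} = measure_pmf.prob (RTp q (ops1 x \<tau> s N) id) C"
      unfolding e1 by (rule bridge[OF dist_ops1 ok])
    also have "\<dots> = measure_pmf.prob (map_pmf inv (RTp q (rev (ops1 x \<tau> s N)) id)) C"
      by (simp add: core_pmf[OF ok])
    also have "\<dots> = measure unif_space {w. ?P2 w \<in> C}"
      unfolding e2 measure_map_pmf
      by (rule bridge[symmetric]) (auto simp: rev_map[symmetric] dist_ops1 okops_rev ok)
    finally have eq: "measure unif_space {w. ?P1 w \<in> C} = measure unif_space {w. ?P2 w \<in> C}" .
    show "emeasure M1 ?X = emeasure M2 ?X"
      unfolding M1_def M2_def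
      using eq Xs m1 m2 by (simp add: emeasure_distr pre U.emeasure_eq_measure)
  qed
  show ?thesis
  proof (intro conjI ballI)
    show "AE w in unif_space. bij (process1 q x \<tau> s w)" by (simp add: process1_bij)
    show "AE w in unif_space. bij (process2 q x \<tau> s w)" by (simp add: process2_bij)
  next
    fix A assume A: "A \<in> sets conf_space"
    have "measure unif_space {w \<in> space unif_space. ?P1 w \<in> A} = measure M1 A"
      unfolding M1_def using A m1 by (simp add: measure_distr vimage_def)
    also have "\<dots> = measure M2 A" by (simp add: \<open>M1 = M2\<close>)
    also have "\<dots> = measure unif_space {w \<in> space unif_space. bij (process2 q x \<tau> s w) \<and> ?P2 w \<in> A}"
      unfolding M2_def using A m2 by (simp add: measure_distr vimage_def process2_bij)
    finally show "measure unif_space {w \<in> space unif_space. ?P1 w \<in> A} =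
       measure unif_space {w \<in> space unif_space. bij (process2 q x \<tau> s w) \<and> ?P2 w \<in> A}" .
  qed
qed


end
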